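(* Let $(V,E,\sigma)$ be an influence graph and let $\mu : V \rightarrow \{+,-\}$ be a (partial) vertex labeling. If $(V,E,\sigma)$ and $\mu$ are consistent, then the disjunctive logic program $P_C\cup\tau((V,E,\sigma),\mu)$ has an answer set.
   Context: An influence graph is a triple $(V,E,\sigma)$ where $V$ is a finite set of vertices, $E\subseteq V\times V$ is a set of directed edges (an edge from $j$ to $i$ is written $j\rightarrow i$), and $\sigma : E\rightarrow\{+,-\}$ is a partial labeling of the edges; in addition, some vertices of $V$ are designated as input vertices. Signs are multiplied as numbers ($++=--=+$, $+-=-+=-$). Given a partial vertex labeling $\mu: V\rightarrow\{+,-\}$, the pair $(V,E,\sigma)$ and $\mu$ are called consistent if there exist total extensions $\sigma':E\rightarrow\{+,-\}$ of $\sigma$ and $\mu':V\rightarrow\{+,-\}$ of $\mu$ such that for every non-input vertex $i\in V$ there is an edge $j\rightarrow i$ in $E$ with $\mu'(i)=\mu'(j)\sigma'(j,i)$. Answer set semantics: a disjunctive logic program is a set of rules $a_1;\dots;a_l \leftarrow b_1,\dots,b_m,\mathit{not}\ c_1,\dots,\mathit{not}\ c_n$ (with $l=0$ giving an integrity constraint, whose empty head is false). Rules with (capitalized) variables stand for all their ground instances obtained by substituting constants occurring in the program; a built-in comparison $S\neq T$ in a body keeps only instances where the substituted constants differ. For a set $X$ of ground atoms, the reduct $P^X$ consists of $\{a_1,\dots,a_l\}\leftarrow b_1,\dots,b_m$ for each ground rule with $\{c_1,\dots,c_n\}\cap X=\emptyset$; $X$ is an answer set of $P$ if it is a $\subseteq$-minimal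 model of $P^X$ (a rule is satisfied if some head atom is in $X$ whenever all $b_k$ are in $X$). Here $+$ and $-$ are constants and vertex names are constants. The instance $\tau((V,E,\sigma),\mu)$ is the set of facts: $\mathit{vertex}(i)$ for each $i\in V$; $\mathit{edge}(j,i)$ for each $j\rightarrow i$ in $E$; $\mathit{observedE}(j,i,s)$ whenever $\sigma(j,i)=s$ is defined; $\mathit{observedV}(i,s)$ whenever $\mu(i)=s$ is defined; $\mathit{input}(i)$ for each input vertex $i$. The program $P_C$ consists of the rules $\mathit{labelV}(V,+);\mathit{labelV}(V,-)\leftarrow \mathit{vertex}(V)$; $\mathit{labelE}(U,V,+);\mathit{labelE}(U,V,-)\leftarrow \mathit{edge}(U,V)$; $\mathit{labelV}(V,S)\leftarrow \mathit{observedV}(V,S)$; $\mathit{labelE}(U,V,S)\leftarrow \mathit{observedE}(U,V,S)$; $\mathit{receive}(V,+)\leftarrow \mathit{labelE}(U,V,S),\mathit{labelV}(U,S)$; $\mathit{receive}(V,-)\leftarrow \mathit{labelE}(U,V,S),\mathit{labelV}(U,T),S\neq T$; $\leftarrow \mathit{labelV}(V,S),\mathit{not}\ \mathit{receive}(V,S),\mathit{not}\ \mathit{input}(V)$. *)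

theory Defs
  imports Main
begin

datatype sign = Pos | Neg

fun sign_mult :: "sign \<Rightarrow> sign \<Rightarrow> sign" where
  "sign_mult Pos s = s"
| "sign_mult Neg Pos = Neg"
| "sign_mult Neg Neg = Pos"

text \<open>An influence graph: finite vertex set V, edges E \<subseteq> V \<times> V (a pair (j,i) is the
edge j \<rightarrow> i), a partial edge labelling sigma defined only on edges, and a set I of input
vertices.\<close>
definition influence_graph ::
  "'v set \<Rightarrow> ('v \<times> 'v) set \<Rightarrow> ('v \<times> 'v \<rightharpoonup> sign) \<Rightarrow> 'v set \<Rightarrow> bool" where
  "influence_graph V E \<sigma> I \<longleftrightarrow> finite V \<and> E \<subseteq> V \<times> V \<and> dom \<sigma> \<subseteq> E \<and> I \<subseteq> V"

definition partial_vlabel :: "'v set \<Rightarrow> ('v \<rightharpoonup> sign) \<Rightarrow> bool" where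
  "partial_vlabel V \<mu> \<longleftrightarrow> dom \<mu> \<subseteq> V"

definition consistent ::
  "'v set \<Rightarrow> ('v \<times> 'v) set \<Rightarrow> ('v \<times> 'v \<rightharpoonup> sign) \<Rightarrow> 'v set \<Rightarrow> ('v \<rightharpoonup> sign) \<Rightarrow> bool" where
  "consistent V E \<sigma> I \<mu> \<longleftrightarrow>
     (\<exists>\<sigma>' :: 'v \<times> 'v \<Rightarrow> sign. \<exists>\<mu>' :: 'v \<Rightarrow> sign.
        (\<forall>e s. \<sigma> e = Some s \<longrightarrow> \<sigma>' e = s) \<and>
        (\<forall>i s. \<mu> i = Some s \<longrightarrow> \<mu>' i = s) \<and>
        (\<forall>i \<in> V - I. \<exists>j. (j, i) \<in> E \<and> \<mu>' i = sign_mult (\<mu>' j) (\<sigma>' (j, i))))"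

record 'a rule =
  head :: "'a set"
  pos  :: "'a set"
  neg  :: "'a set"

definition sat_rule :: "'a set \<Rightarrow> 'a rule \<Rightarrow> bool" where
  "sat_rule X r \<longleftrightarrow> (pos r \<subseteq> X \<longrightarrow> head r \<inter> X \<noteq> {})"

definition is_model :: "'a set \<Rightarrow> 'a rule set \<Rightarrow> bool" where
  "is_model X P \<longleftrightarrow> (\<forall>r \<in> P. sat_rule X r)"

definition reduct :: "'a rule set \<Rightarrow> 'a set \<Rightarrow> 'a rule set" where
  "reduct P X = {\<lparr>head = head r, pos = pos r, neg = {}\<rparr> | r. r \<in> P \<and> neg r \<inter> X = {}}"

definition answer_set :: "'a rule set \<Rightarrow> 'a set \<Rightarrow> bool" where
  "answer_set P X \<longleftrightarrow> is_model X (reduct P X) \<and> (\<forall>Y. Y \<subset> X \<longrightarrow> \<not> is_model Y (reduct P X))"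

datatype 'v const = Vx 'v | Sg sign

datatype 'v atom =
    vertex "'v const"
  | edge "'v const" "'v const"
  | observedE "'v const" "'v const" "'v const"
  | observedV "'v const" "'v const"
  | input "'v const"
  | labelV "'v const" "'v const"
  | labelE "'v const" "'v const" "'v const"
  | receive "'v const" "'v const"

definition fact :: "'a \<Rightarrow> 'a rule" where
  "fact a = \<lparr>head = {a}, pos = {}, neg = {}\<rparr>"

text \<open>The constants occurring in the program: all vertex names (each occurs in a fact
vertex(i)) together with + and - (which occur in P_C).\<close>
definition consts_of :: "'v set \<Rightarrow> 'v const set" where
  "consts_of V = Vx ` V \<union> {Sg Pos, Sg Neg}"

definition ground_PC :: "'v set \<Rightarrow> 'v atom rule set" where
  "ground_PC V = (let C = consts_of V; p = Sg Pos; m = Sg Neg in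
       {\<lparr>head = {labelV v p, labelV v m}, pos = {vertex v}, neg = {}\<rparr> | v. v \<in> C}
     \<union> {\<lparr>head = {labelE u v p, labelE u v m}, pos = {edge u v}, neg = {}\<rparr> | u v. u \<in> C \<and> v \<in> C}
     \<union> {\<lparr>head = {labelV v s}, pos = {observedV v s}, neg = {}\<rparr> | v s. v \<in> C \<and> s \<in> C}
     \<union> {\<lparr>head = {labelE u v s}, pos = {observedE u v s}, neg = {}\<rparr> | u v s. u \<in> C \<and> v \<in> C \<and> s \<in> C}
     \<union> {\<lparr>head = {receive v p}, pos = {labelE u v s, labelV u s}, neg = {}\<rparr>
          | u v s. u \<in> C \<and> v \<in> C \<and> s \<in> C}
     \<union> {\<lparr>head = {receive v m}, pos = {labelE u v s, labelV u t}, neg = {}\<rparr>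
          | u v s t. u \<in> C \<and> v \<in> C \<and> s \<in> C \<and> t \<in> C \<and> s \<noteq> t}
     \<union> {\<lparr>head = {}, pos = {labelV v s}, neg = {receive v s, input v}\<rparr> | v s. v \<in> C \<and> s \<in> C})"

definition tau ::
  "'v set \<Rightarrow> ('v \<times> 'v) set \<Rightarrow> ('v \<times> 'v \<rightharpoonup> sign) \<Rightarrow> 'v set \<Rightarrow> ('v \<rightharpoonup> sign) \<Rightarrow> 'v atom rule set" where
  "tau V E \<sigma> I \<mu> =
       {fact (vertex (Vx i)) | i. i \<in> V}
     \<union> {fact (edge (Vx j) (Vx i)) | j i. (j, i) \<in> E}
     \<union> {fact (observedE (Vx j) (Vx i) (Sg s)) | j i s. \<sigma> (j, i) = Some s}
     \<union> {fact (observedV (Vx i) (Sg s)) | i s. \<mu> i = Some s}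
     \<union> {fact (input (Vx i)) | i. i \<in> I}"

end

theory Submission
  imports Defs
begin

lemma model_reduct_iff:
  "is_model Y (reduct P X) \<longleftrightarrow> (\<forall>r\<in>P. neg r \<inter> X = {} \<longrightarrow> sat_rule Y r)"
  unfolding is_model_def reduct_def sat_rule_def
proof (rule iffI; intro ballI impI)
  fix r assume H: "\<forall>r\<in>{\<lparr>head = head r, pos = pos r, neg = {}\<rparr> |r. r \<in> P \<and> neg r \<inter> X = {}}.
       pos r \<subseteq> Y \<longrightarrow> head r \<inter> Y \<noteq> {}" and "r \<in> P" "neg r \<inter> X = {}" and py: "pos r \<subseteq> Y"
  then have "\<lparr>head = head r, pos = pos r, neg = {}\<rparr> \<in> {\<lparr>head = head r, pos = pos r, neg = {}\<rparr> |r. r \<in> P \<and> neg r \<inter> X = {}}" by blast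
  from H[rule_format, OF this] py show "head r \<inter> Y \<noteq> {}" by simp
next
  fix r assume "\<forall>r\<in>P. neg r \<inter> X = {} \<longrightarrow> pos r \<subseteq> Y \<longrightarrow> head r \<inter> Y \<noteq> {}"
    "r \<in> {\<lparr>head = head r, pos = pos r, neg = {}\<rparr> |r. r \<in> P \<and> neg r \<inter> X = {}}" "pos r \<subseteq> Y"
  then show "head r \<inter> Y \<noteq> {}" by auto
qed

lemma sg_cases: "Sg s = Sg Pos \<or> Sg s = Sg Neg" by (cases s) auto
lemma sg2: "(a \<noteq> Neg) = (a = Pos)" "(a \<noteq> Pos) = (a = Neg)" "(Neg \<noteq> a) = (a = Pos)" "(Pos \<noteq> a) = (a = Neg)"
  by (cases a; simp)+
lemma sm_eq: "sign_mult a a = Pos" by (cases a) auto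
lemma sm_neq: "a \<noteq> b \<Longrightarrow> sign_mult a b = Neg" by (cases a; cases b) auto
lemma sm_inv: "sign_mult a (sign_mult a b) = b" by (cases a; cases b) auto

lemma gp1: "v \<in> consts_of V \<Longrightarrow> \<lparr>head = {labelV v (Sg Pos), labelV v (Sg Neg)}, pos = {vertex v}, neg = {}\<rparr> \<in> ground_PC V"
  unfolding ground_PC_def Let_def by (rule UnI1)+ blast
lemma gp2: "u \<in> consts_of V \<Longrightarrow> v \<in> consts_of V \<Longrightarrow> \<lparr>head = {labelE u v (Sg Pos), labelE u v (Sg Neg)}, pos = {edge u v}, neg = {}\<rparr> \<in> ground_PC V"
  unfolding ground_PC_def Let_def by (rule UnI1, rule UnI1, rule UnI1, rule UnI1, rule UnI1, rule UnI2, blast)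
lemma gp5: "u \<in> consts_of V \<Longrightarrow> v \<in> consts_of V \<Longrightarrow> s \<in> consts_of V \<Longrightarrow> \<lparr>head = {receive v (Sg Pos)}, pos = {labelE u v s, labelV u s}, neg = {}\<rparr> \<in> ground_PC V"
  unfolding ground_PC_def Let_def by (rule UnI1, rule UnI1, rule UnI2, blast)
lemma gp6: "u \<in> consts_of V \<Longrightarrow> v \<in> consts_of V \<Longrightarrow> s \<in> consts_of V \<Longrightarrow> t \<in> consts_of V \<Longrightarrow> s \<noteq> t \<Longrightarrow> \<lparr>head = {receive v (Sg Neg)}, pos = {labelE u v s, labelV u t}, neg = {}\<rparr> \<in> ground_PC V"
  unfolding ground_PC_def Let_def by (rule UnI1, rule UnI2, blast)
lemma tauF: "a \<in> {vertex (Vx i) | i. i \<in> V}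
     \<union> {edge (Vx j) (Vx i) | j i. (j, i) \<in> E}
     \<union> {observedE (Vx j) (Vx i) (Sg s) | j i s. \<sigma> (j, i) = Some s}
     \<union> {observedV (Vx i) (Sg s) | i s. \<mu> i = Some s}
     \<union> {input (Vx i) | i. i \<in> I} \<Longrightarrow> fact a \<in> tau V E \<sigma> I \<mu>"
  unfolding tau_def by (elim UnE; blast)

theorem theorem2:
  fixes V :: "'v set" and E :: "('v \<times> 'v) set" and \<sigma> :: "'v \<times> 'v \<rightharpoonup> sign"
    and I :: "'v set" and \<mu> :: "'v \<rightharpoonup> sign"
  assumes "influence_graph V E \<sigma> I"
    and "partial_vlabel V \<mu>"
    and "consistent V E \<sigma> I \<mu>"
  shows "\<exists>X. answer_set (ground_PC V \<union> tau V E \<sigma> I \<mu>) X"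
proof -
  obtain \<sigma>' \<mu>' where s1: "\<forall>e s. \<sigma> e = Some s \<longrightarrow> \<sigma>' e = s"
    and m1: "\<forall>i s. \<mu> i = Some s \<longrightarrow> \<mu>' i = s"
    and c1: "\<forall>i \<in> V - I. \<exists>j. (j, i) \<in> E \<and> \<mu>' i = sign_mult (\<mu>' j) (\<sigma>' (j, i))"
    using assms(3) unfolding consistent_def by blast
  have domS: "\<And>e s. \<sigma> e = Some s \<Longrightarrow> e \<in> E" using assms(1) unfolding influence_graph_def by blast
  have EV: "\<And>j i. (j,i) \<in> E \<Longrightarrow> j \<in> V \<and> i \<in> V" using assms(1) unfolding influence_graph_def by blast
  have domM: "\<And>i s. \<mu> i = Some s \<Longrightarrow> i \<in> V" using assms(2) unfolding partial_vlabel_def by blast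
  have IV: "I \<subseteq> V" using assms(1) unfolding influence_graph_def by blast
  define F where "F = {vertex (Vx i) | i. i \<in> V}
     \<union> {edge (Vx j) (Vx i) | j i. (j, i) \<in> E}
     \<union> {observedE (Vx j) (Vx i) (Sg s) | j i s. \<sigma> (j, i) = Some s}
     \<union> {observedV (Vx i) (Sg s) | i s. \<mu> i = Some s}
     \<union> {input (Vx i) | i. i \<in> I}"
  define L where "L = {labelV (Vx i) (Sg (\<mu>' i)) | i. i \<in> V}
     \<union> {labelE (Vx j) (Vx i) (Sg (\<sigma>' (j,i))) | j i. (j,i) \<in> E}"
  define R where "R = {receive (Vx i) (Sg (sign_mult (\<mu>' j) (\<sigma>' (j,i)))) | j i. (j,i) \<in> E}"
  define X where "X = F \<union> L \<union> R"
  define P where "P = ground_PC V \<union> tau V E \<sigma> I \<mu>"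
  have x1: "vertex a \<in> X \<longleftrightarrow> (\<exists>i\<in>V. a = Vx i)" for a
    unfolding X_def F_def L_def R_def by blast
  have x2: "edge a b \<in> X \<longleftrightarrow> (\<exists>j i. (j,i)\<in>E \<and> a = Vx j \<and> b = Vx i)" for a b
    unfolding X_def F_def L_def R_def by blast
  have x3: "observedE a b c \<in> X \<longleftrightarrow> (\<exists>j i s. \<sigma> (j,i) = Some s \<and> a = Vx j \<and> b = Vx i \<and> c = Sg s)" for a b c
    unfolding X_def F_def L_def R_def by blast
  have x4: "observedV a c \<in> X \<longleftrightarrow> (\<exists>i s. \<mu> i = Some s \<and> a = Vx i \<and> c = Sg s)" for a c
    unfolding X_def F_def L_def R_def by blast
  have x5: "input a \<in> X \<longleftrightarrow> (\<exists>i\<in>I. a = Vx i)" for a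
    unfolding X_def F_def L_def R_def by blast
  have x6: "labelV a c \<in> X \<longleftrightarrow> (\<exists>i\<in>V. a = Vx i \<and> c = Sg (\<mu>' i))" for a c
    unfolding X_def F_def L_def R_def by blast
  have x7: "labelE a b c \<in> X \<longleftrightarrow> (\<exists>j i. (j,i)\<in>E \<and> a = Vx j \<and> b = Vx i \<and> c = Sg (\<sigma>' (j,i)))" for a b c
    unfolding X_def F_def L_def R_def by blast
  have x8: "receive a c \<in> X \<longleftrightarrow> (\<exists>j i. (j,i)\<in>E \<and> a = Vx i \<and> c = Sg (sign_mult (\<mu>' j) (\<sigma>' (j,i))))" for a c
    unfolding X_def F_def L_def R_def by blast
  note xs = x1 x2 x3 x4 x5 x6 x7 x8
  have model: "\<forall>r\<in>P. neg r \<inter> X = {} \<longrightarrow> sat_rule X r"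
  proof (intro ballI impI)
    fix r assume rP: "r \<in> P" and nr: "neg r \<inter> X = {}"
    show "sat_rule X r"
    proof (cases "r \<in> tau V E \<sigma> I \<mu>")
      case True
      then show ?thesis unfolding tau_def sat_rule_def fact_def
        by (elim UnE CollectE exE conjE; simp add: xs; blast)
    next
      case False
      then have "r \<in> ground_PC V" using rP P_def by blast
      then show ?thesis unfolding ground_PC_def Let_def sat_rule_def
      proof (elim UnE CollectE exE conjE)
        fix v assume r: "r = \<lparr>head = {labelV v (Sg Pos), labelV v (Sg Neg)}, pos = {vertex v}, neg = {}\<rparr>"
        show "pos r \<subseteq> X \<longrightarrow> head r \<inter> X \<noteq> {}" unfolding r by (auto simp: xs sg2)
      next
        fix u v assume r: "r = \<lparr>head = {labelE u v (Sg Pos), labelE u v (Sg Neg)}, pos = {edge u v}, neg = {}\<rparr>"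
        show "pos r \<subseteq> X \<longrightarrow> head r \<inter> X \<noteq> {}" unfolding r by (auto simp: xs sg2)
      next
        fix v s assume r: "r = \<lparr>head = {labelV v s}, pos = {observedV v s}, neg = {}\<rparr>"
        show "pos r \<subseteq> X \<longrightarrow> head r \<inter> X \<noteq> {}" unfolding r using m1 domM by (auto simp: xs)
      next
        fix u v s assume r: "r = \<lparr>head = {labelE u v s}, pos = {observedE u v s}, neg = {}\<rparr>"
        show "pos r \<subseteq> X \<longrightarrow> head r \<inter> X \<noteq> {}" unfolding r using s1 domS by (auto simp: xs)
      next
        fix u v s assume r: "r = \<lparr>head = {receive v (Sg Pos)}, pos = {labelE u v s, labelV u s}, neg = {}\<rparr>"
        show "pos r \<subseteq> X \<longrightarrow> head r \<inter> X \<noteq> {}" unfolding r using sm_eq by (auto simp: xs) metis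
      next
        fix u v s t assume r: "r = \<lparr>head = {receive v (Sg Neg)}, pos = {labelE u v s, labelV u t}, neg = {}\<rparr>"
          and st: "s \<noteq> t"
        show "pos r \<subseteq> X \<longrightarrow> head r \<inter> X \<noteq> {}" unfolding r using sm_neq st by (auto simp: xs) metis
      next
        fix v s assume r: "r = \<lparr>head = {}, pos = {labelV v s}, neg = {receive v s, input v}\<rparr>"
        show "pos r \<subseteq> X \<longrightarrow> head r \<inter> X \<noteq> {}" using nr c1 unfolding r by (auto simp: xs)
      qed
    qed
  qed
  have minimal: "X \<subseteq> Y" if YX: "Y \<subseteq> X" and mY: "\<forall>r\<in>P. neg r \<inter> X = {} \<longrightarrow> sat_rule Y r" for Y
  proof -
    have hR: "head r \<inter> Y \<noteq> {}" if "r \<in> P" "neg r = {}" "pos r \<subseteq> Y" for r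
      using mY that unfolding sat_rule_def by blast
    have FY: "F \<subseteq> Y"
    proof
      fix a assume aF: "a \<in> F"
      have "fact a \<in> P" using tauF[OF aF[unfolded F_def]] unfolding P_def by blast
      from hR[OF this] show "a \<in> Y" by (simp add: fact_def)
    qed
    have VC: "Vx i \<in> consts_of V" if "i \<in> V" for i using that unfolding consts_of_def by blast
    have SC: "Sg s \<in> consts_of V" for s unfolding consts_of_def by (cases s) auto
    have LY: "L \<subseteq> Y"
    proof
      fix a assume aL: "a \<in> L"
      then consider (v) i where "i \<in> V" "a = labelV (Vx i) (Sg (\<mu>' i))"
        | (e) j i where "(j,i) \<in> E" "a = labelE (Vx j) (Vx i) (Sg (\<sigma>' (j,i)))"
        unfolding L_def by blast
      then show "a \<in> Y"
      proof cases
        case v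
        let ?r = "\<lparr>head = {labelV (Vx i) (Sg Pos), labelV (Vx i) (Sg Neg)}, pos = {vertex (Vx i)}, neg = {}\<rparr>"
        have rP: "?r \<in> P" unfolding P_def using gp1[OF VC[OF v(1)]] by (rule UnI1)
        have "vertex (Vx i) \<in> F" unfolding F_def using v(1) by blast
        then have pY: "pos ?r \<subseteq> Y" using FY by auto
        have "head ?r \<inter> Y \<noteq> {}" using hR[OF rP _ pY] by simp
        then obtain b where bh: "b \<in> head ?r" and bY: "b \<in> Y" by blast
        have "b \<in> X" using YX bY by blast
        then have "b = a" using bh v(2) x6 by auto
        then show ?thesis using bY by simp
      next
        case e
        have jV: "j \<in> V" "i \<in> V" using EV[OF e(1)] by auto
        let ?r = "\<lparr>head = {labelE (Vx j) (Vx i) (Sg Pos), labelE (Vx j) (Vx i) (Sg Neg)}, pos = {edge (Vx j) (Vx i)}, neg = {}\<rparr>"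
        have rP: "?r \<in> P" unfolding P_def using gp2[OF VC[OF jV(1)] VC[OF jV(2)]] by (rule UnI1)
        have "edge (Vx j) (Vx i) \<in> F" unfolding F_def using e(1) by blast
        then have pY: "pos ?r \<subseteq> Y" using FY by auto
        have "head ?r \<inter> Y \<noteq> {}" using hR[OF rP _ pY] by simp
        then obtain b where bh: "b \<in> head ?r" and bY: "b \<in> Y" by blast
        have "b \<in> X" using YX bY by blast
        then have "b = a" using bh e(2) x7 by auto
        then show ?thesis using bY by simp
      qed
    qed
    have RY: "R \<subseteq> Y"
    proof
      fix a assume "a \<in> R"
      then obtain j i where e: "(j,i) \<in> E" "a = receive (Vx i) (Sg (sign_mult (\<mu>' j) (\<sigma>' (j,i))))"
        unfolding R_def by blast
      have jV: "j \<in> V" "i \<in> V" using EV[OF e(1)] by auto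
      have l1: "labelE (Vx j) (Vx i) (Sg (\<sigma>' (j,i))) \<in> Y" using LY e(1) unfolding L_def by blast
      have l2: "labelV (Vx j) (Sg (\<mu>' j)) \<in> Y" using LY EV[OF e(1)] unfolding L_def by blast
      show "a \<in> Y"
      proof (cases "\<mu>' j = \<sigma>' (j,i)")
        case True
        let ?r = "\<lparr>head = {receive (Vx i) (Sg Pos)}, pos = {labelE (Vx j) (Vx i) (Sg (\<sigma>' (j,i))), labelV (Vx j) (Sg (\<sigma>' (j,i)))}, neg = {}\<rparr>"
        have rP: "?r \<in> P" unfolding P_def using gp5[OF VC[OF jV(1)] VC[OF jV(2)] SC] by (rule UnI1)
        have pY: "pos ?r \<subseteq> Y" using l1 l2 True by simp
        have "head ?r \<inter> Y \<noteq> {}" using hR[OF rP _ pY] by simp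
        then show ?thesis using e True by (simp add: sm_eq)
      next
        case False
        let ?r = "\<lparr>head = {receive (Vx i) (Sg Neg)}, pos = {labelE (Vx j) (Vx i) (Sg (\<sigma>' (j,i))), labelV (Vx j) (Sg (\<mu>' j))}, neg = {}\<rparr>"
        have "Sg (\<sigma>' (j,i)) \<noteq> Sg (\<mu>' j)" using False by simp
        then have rP: "?r \<in> P" unfolding P_def by (rule UnI1[OF gp6[OF VC[OF jV(1)] VC[OF jV(2)] SC SC]])
        have pY: "pos ?r \<subseteq> Y" using l1 l2 by simp
        have "head ?r \<inter> Y \<noteq> {}" using hR[OF rP _ pY] by simp
        then show ?thesis using e False by (simp add: sm_neq)
      qed
    qed
    show ?thesis using FY LY RY unfolding X_def by blast
  qed
  have "answer_set P X"
    unfolding answer_set_def model_reduct_iff using model minimal by blast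
  thus ?thesis unfolding P_def by blast
qed

end
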